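(* $\mathcal M\subset(\gamma\mathcal S)^{\#}=(\tilde\gamma(\mathcal S^* ))^{\#}$. In particular, for every mild mixing system $(X,T)$, all nonempty open $U,V\subset X$, and every $A\subset\mathbb N$ containing a translate of an SIP set, the set $N(U,V)\cap A$ contains a translate of an SIP set.
   Context: A dynamical system $(X,T)$: $X$ compact metric, $T$ a homeomorphism. $\mathbb N=\{1,2,\dots\}$; $N(U,V)=\{n\in\mathbb N:T^n(U)\cap V\ne\emptyset\}$. For finite $F\subset\mathbb Z$, $\sigma_F$ is the sum of its elements ($\sigma_\emptyset=0$); $IP(A)=\{\sigma_F:F\subset A\text{ finite}\}$, $SIP(A)=\{a-b:a,b\in IP(A)\}$. A family on $\mathbb N$ is a collection of subsets closed under supersets; its dual is $\mathcal F^*=\{B: B\cap A\ne\emptyset\ \forall A\in\mathcal F\}$; its sharp dual is $\mathcal F^{\#}=\{A: A\cap B\in\mathcal F\ \forall B\in\mathcal F\}$. $\mathcal S$ is the family of SIP sets: $B\subset\mathbb N$ with $SIP(L)\cap\mathbb N\subset B$ for some infinite $L\subset\mathbb N$. $\gamma\mathcal S$ is the family of sets containing a translate of an SIP set, i.e. $B\subset\mathbb N$ such that $(SIP(L)+u)\cap\mathbb N\subset B$ for some infinite $L\subset\mathbb N$, $u\in\mathbb Z$. For a family $\mathcal F$, $\tilde\gamma\mathcal F=\{A\subset\mathbb N:(A+n)\cap\mathbb N\in\mathcal F\text{ for all }n\in\mathbb Z\}$. A system is mild mixing if for all nonempty open $U,V$, $N(U,V)\in\mathcal S^*$. $\mathcal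 M$ is the family of subsets of $\mathbb N$ containing some $N(U,V)$ with $(X,T)$ mild mixing and $U,V\subset X$ nonempty open. *)

theory Defs
  imports "HOL-Analysis.Analysis"
begin

text \<open>The positive integers N = {1,2,...}, represented inside nat.
  Subsets of N are nat sets contained in Pos; families are nat set sets
  all of whose members are contained in Pos.\<close>

definition Pos :: "nat set" where
  "Pos = {n. 0 < n}"

definition IP :: "nat set \<Rightarrow> int set" where
  "IP A = {int (\<Sum>F) | F. finite F \<and> F \<subseteq> A}"

definition SIP :: "nat set \<Rightarrow> int set" where
  "SIP A = {a - b | a b. a \<in> IP A \<and> b \<in> IP A}"

definition SIP_translate :: "nat set \<Rightarrow> int \<Rightarrow> nat set" where
  "SIP_translate L u = {m \<in> Pos. int m - u \<in> SIP L}"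

definition SIP_family :: "nat set set" where
  "SIP_family = {B. B \<subseteq> Pos \<and> (\<exists>L. infinite L \<and> L \<subseteq> Pos \<and> SIP_translate L 0 \<subseteq> B)}"

definition gamma_SIP_family :: "nat set set" where
  "gamma_SIP_family = {B. B \<subseteq> Pos \<and>
     (\<exists>L u. infinite L \<and> L \<subseteq> Pos \<and> SIP_translate L u \<subseteq> B)}"

definition dual_family :: "nat set set \<Rightarrow> nat set set" where
  "dual_family F = {B. B \<subseteq> Pos \<and> (\<forall>A\<in>F. B \<inter> A \<noteq> {})}"

definition sharp_dual :: "nat set set \<Rightarrow> nat set set" where
  "sharp_dual F = {A. A \<subseteq> Pos \<and> (\<forall>B\<in>F. A \<inter> B \<in> F)}"

definition tilde_gamma :: "nat set set \<Rightarrow> nat set set" where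
  "tilde_gamma F = {A. A \<subseteq> Pos \<and> (\<forall>n::int. {m \<in> Pos. int m - n \<in> int ` A} \<in> F)}"

definition hitting_set :: "('a \<Rightarrow> 'a) \<Rightarrow> 'a set \<Rightarrow> 'a set \<Rightarrow> nat set" where
  "hitting_set T U V = {n \<in> Pos. (T ^^ n) ` U \<inter> V \<noteq> {}}"

definition dyn_system :: "'a::metric_space set \<Rightarrow> ('a \<Rightarrow> 'a) \<Rightarrow> bool" where
  "dyn_system X T \<longleftrightarrow> compact X \<and> (\<exists>S. homeomorphism X X T S)"

definition mild_mixing :: "'a::metric_space set \<Rightarrow> ('a \<Rightarrow> 'a) \<Rightarrow> bool" where
  "mild_mixing X T \<longleftrightarrow> dyn_system X T \<and>
     (\<forall>U V. openin (top_of_set X) U \<and> U \<noteq> {} \<and> openin (top_of_set X) V \<and> V \<noteq> {}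
        \<longrightarrow> hitting_set T U V \<in> dual_family SIP_family)"

end

theory Submission
  imports Defs "HOL-Library.Infinite_Set"
begin

lemma IP_mono: "A \<subseteq> B \<Longrightarrow> IP A \<subseteq> IP B"
  unfolding IP_def by blast

lemma SIP_mono: "A \<subseteq> B \<Longrightarrow> SIP A \<subseteq> SIP B"
  unfolding SIP_def using IP_mono by blast

lemma SIP_zero: "0 \<in> SIP A"
proof -
  have "int (\<Sum>{}) \<in> IP A" unfolding IP_def by blast
  then show ?thesis unfolding SIP_def by force
qed

lemma SIP_neg: "x \<in> SIP A \<Longrightarrow> - x \<in> SIP A"
  unfolding SIP_def by force

lemma SIP_elem: "x \<in> SIP A \<Longrightarrow> \<exists>F G. finite F \<and> F \<subseteq> A \<and> finite G \<and> G \<subseteq> A \<and> x = int (\<Sum>F) - int (\<Sum>G)"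
  unfolding SIP_def IP_def by blast

lemma SIP_intro: "finite F \<Longrightarrow> F \<subseteq> A \<Longrightarrow> finite G \<Longrightarrow> G \<subseteq> A \<Longrightarrow> int (\<Sum>F) - int (\<Sum>G) \<in> SIP A"
  unfolding SIP_def IP_def by blast

lemma SIP_single: "int l \<in> SIP {l}"
  using SIP_intro[of "{l}" "{l}" "{}"] by simp

lemma SIP_add:
  assumes "x \<in> SIP A" "y \<in> SIP B" "A \<inter> B = {}"
  shows "x + y \<in> SIP (A \<union> B)"
proof -
  obtain F G where FG: "finite F" "F \<subseteq> A" "finite G" "G \<subseteq> A" "x = int (\<Sum>F) - int (\<Sum>G)"
    using SIP_elem[OF assms(1)] by blast
  obtain F' G' where FG': "finite F'" "F' \<subseteq> B" "finite G'" "G' \<subseteq> B" "y = int (\<Sum>F') - int (\<Sum>G')"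
    using SIP_elem[OF assms(2)] by blast
  have d1: "F \<inter> F' = {}" "G \<inter> G' = {}" using FG(2,4) FG'(2,4) assms(3) by blast+
  have e1: "\<Sum>(F \<union> F') = \<Sum>F + \<Sum>F'" using sum.union_disjoint[OF FG(1) FG'(1) d1(1)] .
  have e2: "\<Sum>(G \<union> G') = \<Sum>G + \<Sum>G'" using sum.union_disjoint[OF FG(3) FG'(3) d1(2)] .
  have "x + y = int (\<Sum>(F \<union> F')) - int (\<Sum>(G \<union> G'))" unfolding e1 e2 FG(5) FG'(5) by simp
  moreover have "int (\<Sum>(F \<union> F')) - int (\<Sum>(G \<union> G')) \<in> SIP (A \<union> B)"
    by (rule SIP_intro) (use FG(1-4) FG'(1-4) in blast)+
  ultimately show ?thesis by simp
qed

lemma SIP_fin: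
  assumes "x \<in> SIP A"
  shows "\<exists>A'. A' \<subseteq> A \<and> finite A' \<and> x \<in> SIP A'"
proof -
  obtain F G where FG: "finite F" "F \<subseteq> A" "finite G" "G \<subseteq> A" "x = int (\<Sum>F) - int (\<Sum>G)"
    using SIP_elem[OF assms] by blast
  have "int (\<Sum>F) - int (\<Sum>G) \<in> SIP (F \<union> G)"
    by (rule SIP_intro[OF FG(1) _ FG(3)]) blast+
  then have "x \<in> SIP (F \<union> G)" using FG(5) by simp
  moreover have "F \<union> G \<subseteq> A" using FG(2,4) by blast
  moreover have "finite (F \<union> G)" using FG(1,3) by blast
  ultimately show ?thesis by blast
qed

lemma funpow_image: "T ` X = X \<Longrightarrow> (T^^n) ` X = X"
proof (induction n)
  case 0 then show ?case by simp
next
  case (Suc n)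
  have "(T^^Suc n) ` X = T ` ((T^^n) ` X)" by (simp only: funpow.simps(2) image_comp)
  then show ?case using Suc by simp
qed

lemma funpow_cont: "continuous_on X T \<Longrightarrow> T ` X = X \<Longrightarrow> continuous_on X (T^^n)"
proof (induction n)
  case 0 then show ?case by (simp add: continuous_on_id)
next
  case (Suc n)
  have "continuous_on X (T \<circ> T^^n)"
    using Suc.IH[OF Suc.prems] Suc.prems funpow_image[of T X n]
    by (intro continuous_on_compose) simp_all
  then show ?case by simp
qed

lemma preim_open:
  assumes "continuous_on X T" "T ` X = X" "openin (top_of_set X) W"
  shows "openin (top_of_set X) (X \<inter> (T^^n) -` W)"
proof -
  have "openin (top_of_set ((T^^n) ` X)) W" using funpow_image[OF assms(2), of n] assms(3) by simp
  then show ?thesis using funpow_cont[OF assms(1,2), of n] unfolding continuous_on_open by blast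
qed

lemma preim_ne:
  assumes "T ` X = X" "W \<subseteq> X" "W \<noteq> {}"
  shows "X \<inter> (T^^n) -` W \<noteq> {}"
proof -
  obtain w where "w \<in> W" using assms by auto
  then have "w \<in> (T^^n) ` X" using funpow_image[OF assms(1)] assms(2) by auto
  then show ?thesis using \<open>w \<in> W\<close> by auto
qed

lemma mm_basic:
  assumes "mild_mixing X T"
  shows "T ` X = X" "continuous_on X T"
proof -
  have "dyn_system X T" using assms unfolding mild_mixing_def by (rule conjunct1)
  then obtain S where h: "homeomorphism X X T S" unfolding dyn_system_def by (elim conjE exE)
  show "T ` X = X" by (rule homeomorphism_image1[OF h])
  show "continuous_on X T" by (rule homeomorphism_cont1[OF h])
qed

lemma choose:
  assumes mm: "mild_mixing X T"
    and W1: "openin (top_of_set X) W1" "W1 \<noteq> {}"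
    and W2: "openin (top_of_set X) W2" "W2 \<noteq> {}"
    and L: "infinite L" "L \<subseteq> Pos"
  shows "\<exists>m b'. 0 < m \<and> int m - u > int b \<and> b' \<ge> m \<and> (\<exists>x\<in>W1. (T^^m) x \<in> W2)
            \<and> int m - u \<in> SIP (L \<inter> {b<..b'})"
proof -
  note TX = mm_basic(1)[OF mm] and cT = mm_basic(2)[OF mm]
  obtain l where l: "l \<in> L" "l > b + nat (-u)" using L(1) unfolding infinite_nat_iff_unbounded by blast
  define c where "c = nat (u + int l)"
  have c: "int c = u + int l" unfolding c_def using l(2) by linarith
  define L1 where "L1 = L - {..l}"
  have L1inf: "infinite L1" unfolding L1_def using L(1) by (simp add: Diff_infinite_finite)
  have L1pos: "L1 \<subseteq> Pos" using L(2) unfolding L1_def by blast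
  define W2' where "W2' = X \<inter> (T^^c) -` W2"
  have W2'o: "openin (top_of_set X) W2'" unfolding W2'_def by (rule preim_open[OF cT TX W2(1)])
  have W2sub: "W2 \<subseteq> X" using openin_subset[OF W2(1)] by simp
  have W2'ne: "W2' \<noteq> {}" unfolding W2'_def by (rule preim_ne[OF TX W2sub W2(2)])
  have "hitting_set T W1 W2' \<in> dual_family SIP_family"
    using mm W1 W2'o W2'ne unfolding mild_mixing_def by blast
  moreover have "SIP_translate L1 0 \<in> SIP_family"
    unfolding SIP_family_def using L1inf L1pos by (auto simp: SIP_translate_def)
  ultimately obtain s where s: "s \<in> hitting_set T W1 W2'" "s \<in> SIP_translate L1 0"
    unfolding dual_family_def by blast
  have s0: "s > 0" "int s \<in> SIP L1" using s(2) unfolding SIP_translate_def Pos_def by auto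
  obtain x where x: "x \<in> W1" "(T^^s) x \<in> W2'" using s(1) unfolding hitting_set_def by blast
  obtain A' where A': "A' \<subseteq> L1" "finite A'" "int s \<in> SIP A'" using SIP_fin[OF s0(2)] by blast
  define m where "m = c + s"
  define b' where "b' = Max (insert l A') + m"
  have "(T^^m) x = (T^^c) ((T^^s) x)" unfolding m_def by (simp add: funpow_add)
  then have xm: "(T^^m) x \<in> W2" using x(2) unfolding W2'_def by simp
  have mu: "int m - u = int l + int s" unfolding m_def using c by simp
  have dis: "{l} \<inter> A' = {}" using A'(1) unfolding L1_def by blast
  have "int l + int s \<in> SIP ({l} \<union> A')" by (rule SIP_add[OF SIP_single A'(3) dis])
  moreover have "{l} \<union> A' \<subseteq> L \<inter> {b<..b'}"
  proof
    fix y assume y: "y \<in> {l} \<union> A'"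
    have fin: "finite (insert l A')" using A'(2) by simp
    have "y \<le> Max (insert l A')" using y fin by (intro Max_ge) auto
    then have "y \<le> b'" unfolding b'_def by simp
    moreover have "y \<in> L \<and> y > b"
    proof (cases "y = l")
      case True then show ?thesis using l by simp
    next
      case False then have "y \<in> L1" using y A'(1) by blast
      then show ?thesis using l unfolding L1_def by simp
    qed
    ultimately show "y \<in> L \<inter> {b<..b'}" by simp
  qed
  ultimately have "int m - u \<in> SIP (L \<inter> {b<..b'})" unfolding mu using SIP_mono by blast
  moreover have "0 < m" unfolding m_def using s0 by simp
  moreover have "int m - u > int b" using mu l(2) by simp
  moreover have "b' \<ge> m" unfolding b'_def by simp
  ultimately show ?thesis using x(1) xm by (intro exI[of _ m] exI[of _ b']) blast
qed

lemma SIP_sum: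
  fixes nk bk :: "nat \<Rightarrow> nat" and d0 :: int
  assumes d0: "d0 \<in> SIP (L \<inter> {..bk 0})"
    and nk: "\<And>k. int (nk k) \<in> SIP (L \<inter> {bk k<..bk (Suc k)})"
    and bk: "\<And>k. bk k \<le> bk (Suc k)"
    and c: "\<And>i. c i = 1 \<or> c i = 0 \<or> c i = (-1::int)"
  shows "d0 + (\<Sum>i<N. c i * int (nk i)) \<in> SIP (L \<inter> {..bk N})"
proof (induction N)
  case 0 then show ?case using d0 by simp
next
  case (Suc N)
  have ci: "c N * int (nk N) \<in> SIP (L \<inter> {bk N<..bk (Suc N)})"
    using c[of N] nk[of N] SIP_zero SIP_neg by auto
  have dis: "(L \<inter> {..bk N}) \<inter> (L \<inter> {bk N<..bk (Suc N)}) = {}" by auto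
  have un: "(L \<inter> {..bk N}) \<union> (L \<inter> {bk N<..bk (Suc N)}) = L \<inter> {..bk (Suc N)}"
    using bk[of N] by auto
  have "d0 + (\<Sum>i<N. c i * int (nk i)) + c N * int (nk N) \<in> SIP (L \<inter> {..bk (Suc N)})"
    using SIP_add[OF Suc.IH ci dis] unfolding un .
  then show ?case by (simp add: add.assoc)
qed

lemma claim1:
  assumes mm: "mild_mixing X T"
    and U: "openin (top_of_set X) U" "U \<noteq> {}"
    and V: "openin (top_of_set X) V" "V \<noteq> {}"
    and L: "infinite L" "L \<subseteq> Pos"
  shows "\<exists>L' u'. infinite L' \<and> L' \<subseteq> Pos \<and> SIP_translate L' u' \<subseteq> hitting_set T U V \<inter> SIP_translate L u"
proof -
  note TX = mm_basic(1)[OF mm] and cT = mm_basic(2)[OF mm]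
  obtain v b0 where v: "0 < v" "b0 \<ge> v" "\<exists>x\<in>U. (T^^v) x \<in> V"
      "int v - u \<in> SIP (L \<inter> {0<..b0})"
    using choose[OF mm U V L, where u=u and b=0] by blast
  define W0 where "W0 = U \<inter> (X \<inter> (T^^v) -` V)"
  have Usub: "U \<subseteq> X" using openin_subset[OF U(1)] by simp
  have W0o: "openin (top_of_set X) W0" unfolding W0_def
    by (intro openin_Int U(1) preim_open[OF cT TX V(1)])
  have W0ne: "W0 \<noteq> {}" unfolding W0_def using v(3) Usub by blast
  define P where "P = (\<lambda>(k::nat) (s::'a set \<times> nat \<times> nat). openin (top_of_set X) (fst s) \<and> fst s \<noteq> {}
      \<and> (k = 0 \<longrightarrow> fst s = W0 \<and> fst (snd s) = b0))"
  define Q where "Q = (\<lambda>(k::nat) (s::'a set \<times> nat \<times> nat) (s'::'a set \<times> nat \<times> nat).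
      snd (snd s') > fst (snd s) \<and> fst (snd s') \<ge> snd (snd s')
      \<and> int (snd (snd s')) \<in> SIP (L \<inter> {fst (snd s)<..fst (snd s')})
      \<and> fst s' = X \<inter> fst s \<inter> (T^^(snd (snd s'))) -` (fst s))"
  have P0: "\<exists>s. P 0 s" unfolding P_def using W0o W0ne by (intro exI[of _ "(W0, b0, 0)"]) simp
  have PS: "\<exists>s'. P (Suc k) s' \<and> Q k s s'" if Ps: "P k s" for k s
  proof -
    obtain W b z where sWb: "s = (W, b, z)" by (cases s) blast
    have Wo: "openin (top_of_set X) W" and Wne: "W \<noteq> {}" using Ps unfolding P_def sWb by simp_all
    obtain n b' where nb: "0 < n" "int n - 0 > int b" "b' \<ge> n" "\<exists>x\<in>W. (T^^n) x \<in> W"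
        "int n - 0 \<in> SIP (L \<inter> {b<..b'})"
      using choose[OF mm Wo Wne Wo Wne L, where u=0 and b=b] by blast
    define W' where "W' = X \<inter> W \<inter> (T^^n) -` W"
    have Wsub: "W \<subseteq> X" using openin_subset[OF Wo] by simp
    have "W' = W \<inter> (X \<inter> (T^^n) -` W)" unfolding W'_def by blast
    then have W'o: "openin (top_of_set X) W'" using openin_Int[OF Wo preim_open[OF cT TX Wo]] by simp
    have W'ne: "W' \<noteq> {}" unfolding W'_def using nb(4) Wsub by blast
    show ?thesis
      by (intro exI[of _ "(W', b', n)"]) (use nb W'o W'ne in \<open>simp add: P_def Q_def sWb W'_def\<close>)
  qed
  obtain f where f: "\<And>k. P k (f k) \<and> Q k (f k) (f (Suc k))"
    using dependent_nat_choice[of P Q, OF P0 PS] by blast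
  define Wk where "Wk k = fst (f k)" for k
  define bk where "bk k = fst (snd (f k))" for k
  define nk where "nk k = snd (snd (f (Suc k)))" for k
  have Wk0: "Wk 0 = W0" and bk0: "bk 0 = b0" using f[of 0] unfolding P_def Wk_def bk_def by simp_all
  have Wko: "openin (top_of_set X) (Wk k)" and Wkne: "Wk k \<noteq> {}" for k
    using f[of k] unfolding P_def Wk_def by simp_all
  have nkb: "nk k > bk k" and bkn: "bk (Suc k) \<ge> nk k"
    and nkS: "int (nk k) \<in> SIP (L \<inter> {bk k<..bk (Suc k)})"
    and WkS: "Wk (Suc k) = X \<inter> Wk k \<inter> (T^^(nk k)) -` (Wk k)" for k
    using f[of k] unfolding Q_def Wk_def bk_def nk_def by simp_all
  have bkmono: "bk k \<le> bk (Suc k)" for k using nkb[of k] bkn[of k] by simp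
  have smono: "strict_mono nk"
    unfolding strict_mono_Suc_iff using nkb bkn by (meson le_less_trans)
  have inj: "inj nk" using smono by (rule strict_mono_imp_inj_on)
  have inv: "(T^^(\<Sum>i\<in>F. nk i)) x \<in> W0" if "F \<subseteq> {..<k}" "x \<in> Wk k" for k F x
    using that
  proof (induction k arbitrary: F x)
    case 0 then show ?case using Wk0 by simp
  next
    case (Suc k)
    have x1: "x \<in> Wk k" "(T^^(nk k)) x \<in> Wk k" using Suc.prems(2) WkS[of k] by auto
    show ?case
    proof (cases "k \<in> F")
      case False
      then have "F \<subseteq> {..<k}" using Suc.prems(1) by (auto simp: less_Suc_eq)
      then show ?thesis using Suc.IH x1(1) by blast
    next
      case True
      have fin: "finite F" using Suc.prems(1) finite_subset by blast
      have F': "F - {k} \<subseteq> {..<k}" using Suc.prems(1) by auto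
      have "(\<Sum>i\<in>F. nk i) = (\<Sum>i\<in>F - {k}. nk i) + nk k"
        using sum.remove[OF fin True, of nk] by simp
      then have "(T^^(\<Sum>i\<in>F. nk i)) x = (T^^(\<Sum>i\<in>F - {k}. nk i)) ((T^^(nk k)) x)"
        by (simp add: funpow_add)
      then show ?thesis using Suc.IH[OF F' x1(2)] by simp
    qed
  qed
  define L' where "L' = range nk"
  have L'inf: "infinite L'" unfolding L'_def using range_inj_infinite[OF inj] .
  have L'pos: "L' \<subseteq> Pos" unfolding L'_def Pos_def using nkb by (auto intro: le_less_trans)
  have d0: "int v - u \<in> SIP (L \<inter> {..bk 0})"
  proof -
    have "L \<inter> {0<..b0} \<subseteq> L \<inter> {..b0}" by auto
    then show ?thesis using v(4) SIP_mono[of "L \<inter> {0<..b0}" "L \<inter> {..b0}"] bk0 by blast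
  qed
  have "SIP_translate L' (int v) \<subseteq> hitting_set T U V \<inter> SIP_translate L u"
  proof
    fix m assume m: "m \<in> SIP_translate L' (int v)"
    then have mpos: "m \<in> Pos" and mS: "int m - int v \<in> SIP L'" unfolding SIP_translate_def by auto
    obtain A B where AB: "finite A" "A \<subseteq> L'" "finite B" "B \<subseteq> L'" "int m - int v = int (\<Sum>A) - int (\<Sum>B)"
      using SIP_elem[OF mS] by blast
    define I where "I = nk -` A"
    define J where "J = nk -` B"
    have Ifin: "finite I" unfolding I_def using AB(1) inj by (simp add: finite_vimageI)
    have Jfin: "finite J" unfolding J_def using AB(3) inj by (simp add: finite_vimageI)
    have AI: "A = nk ` I" unfolding I_def using AB(2) unfolding L'_def by auto
    have BJ: "B = nk ` J" unfolding J_def using AB(4) unfolding L'_def by auto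
    have sA: "\<Sum>A = (\<Sum>i\<in>I. nk i)" unfolding AI by (rule sum.reindex_cong[OF inj_on_subset[OF inj subset_UNIV]]) simp_all
    have sB: "\<Sum>B = (\<Sum>i\<in>J. nk i)" unfolding BJ by (rule sum.reindex_cong[OF inj_on_subset[OF inj subset_UNIV]]) simp_all
    obtain N where N: "I \<union> J \<subseteq> {..<N}" using finite_nat_bounded[of "I \<union> J"] Ifin Jfin by blast
    have eq: "int m - int v = int (\<Sum>i\<in>I. nk i) - int (\<Sum>i\<in>J. nk i)" using AB(5) sA sB by simp
    obtain x where x: "x \<in> Wk N" using Wkne[of N] by blast
    have yW: "(T^^(\<Sum>i\<in>J. nk i)) x \<in> W0" using inv[of J N x] N x by blast
    have zW: "(T^^(\<Sum>i\<in>I. nk i)) x \<in> W0" using inv[of I N x] N x by blast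
    have neq: "m + (\<Sum>i\<in>J. nk i) = v + (\<Sum>i\<in>I. nk i)" using eq by linarith
    have "(T^^m) ((T^^(\<Sum>i\<in>J. nk i)) x) = (T^^v) ((T^^(\<Sum>i\<in>I. nk i)) x)"
      by (metis funpow_add comp_apply neq)
    also have "\<dots> \<in> V" using zW unfolding W0_def by blast
    finally have "(T^^m) ((T^^(\<Sum>i\<in>J. nk i)) x) \<in> V" .
    moreover have "(T^^(\<Sum>i\<in>J. nk i)) x \<in> U" using yW unfolding W0_def by blast
    ultimately have m1: "m \<in> hitting_set T U V" unfolding hitting_set_def using mpos by blast
    define c where "c i = (if i \<in> I then 1 else 0) - (if i \<in> J then 1 else (0::int))" for i
    have c3: "c i = 1 \<or> c i = 0 \<or> c i = -1" for i unfolding c_def by auto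
    have sI: "(\<Sum>i<N. (if i \<in> I then int (nk i) else 0)) = int (\<Sum>i\<in>I. nk i)"
    proof -
      have "(\<Sum>i<N. (if i \<in> I then int (nk i) else 0)) = (\<Sum>i\<in>{..<N} \<inter> I. int (nk i))"
        by (rule sum.inter_restrict[symmetric]) simp
      also have "{..<N} \<inter> I = I" using N by blast
      finally show ?thesis by simp
    qed
    have sJ: "(\<Sum>i<N. (if i \<in> J then int (nk i) else 0)) = int (\<Sum>i\<in>J. nk i)"
    proof -
      have "(\<Sum>i<N. (if i \<in> J then int (nk i) else 0)) = (\<Sum>i\<in>{..<N} \<inter> J. int (nk i))"
        by (rule sum.inter_restrict[symmetric]) simp
      also have "{..<N} \<inter> J = J" using N by blast
      finally show ?thesis by simp
    qed
    have "(\<Sum>i<N. c i * int (nk i)) = (\<Sum>i<N. (if i \<in> I then int (nk i) else 0) - (if i \<in> J then int (nk i) else 0))"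
      unfolding c_def by (intro sum.cong) (auto simp: algebra_simps)
    also have "\<dots> = int (\<Sum>i\<in>I. nk i) - int (\<Sum>i\<in>J. nk i)"
      unfolding sum_subtractf sI sJ ..
    finally have csum: "(\<Sum>i<N. c i * int (nk i)) = int m - int v" using eq by simp
    have "(int v - u) + (\<Sum>i<N. c i * int (nk i)) \<in> SIP (L \<inter> {..bk N})"
      by (rule SIP_sum[OF d0 nkS bkmono c3])
    then have "int m - u \<in> SIP (L \<inter> {..bk N})" unfolding csum by simp
    then have "int m - u \<in> SIP L" using SIP_mono[of "L \<inter> {..bk N}" L] by blast
    then have "m \<in> SIP_translate L u" unfolding SIP_translate_def using mpos by blast
    with m1 show "m \<in> hitting_set T U V \<inter> SIP_translate L u" by blast
  qed
  then show ?thesis using L'inf L'pos by blast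
qed

lemma sparse_key:
  fixes s :: "nat \<Rightarrow> nat"
  assumes sp: "\<And>j. (\<Sum>i<j. s i) + M < s j"
    and fin: "finite I" "finite J" and dis: "I \<inter> J = {}" and j: "j \<in> I" and mx: "\<forall>i\<in>I \<union> J. i \<le> j"
  shows "(\<Sum>i\<in>J. s i) + M < (\<Sum>i\<in>I. s i)"
proof -
  have "J \<subseteq> {..<j}"
  proof
    fix i assume i: "i \<in> J"
    then have "i \<le> j" using mx by blast
    moreover have "i \<noteq> j" using i j dis by blast
    ultimately show "i \<in> {..<j}" by simp
  qed
  then have "(\<Sum>i\<in>J. s i) \<le> (\<Sum>i<j. s i)" by (intro sum_mono2) auto
  moreover have "s j \<le> (\<Sum>i\<in>I. s i)" using member_le_sum[of j I s] j fin(1) by simp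
  ultimately show ?thesis using sp[of j] by linarith
qed

lemma sparse:
  fixes L :: "nat set" and M :: nat
  assumes L: "infinite L"
  shows "\<exists>L'. L' \<subseteq> L \<and> infinite L' \<and> (\<forall>x\<in>SIP L'. x = 0 \<or> \<bar>x\<bar> > int M)"
proof -
  have unb: "\<exists>y\<in>L. y > b" for b using L unfolding infinite_nat_iff_unbounded by blast
  have P0: "\<exists>x. x \<in> L \<and> x > M" using unb by blast
  have PS: "\<exists>y. (y \<in> L \<and> y > M) \<and> y > 2 * x + M" if "x \<in> L \<and> x > M" for x k
    using unb[of "2 * x + M"] by auto
  obtain s where s: "\<And>k. (s k \<in> L \<and> s k > M) \<and> s (Suc k) > 2 * s k + M"
    using dependent_nat_choice[of "\<lambda>k x. x \<in> L \<and> x > M" "\<lambda>k x y. y > 2 * x + M", OF P0 PS] by blast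
  have sp: "(\<Sum>i<j. s i) + M < s j" for j
  proof (induction j)
    case 0 then show ?case using s[of 0] by simp
  next
    case (Suc j) then show ?case using s[of j] by simp
  qed
  have smono: "strict_mono s" unfolding strict_mono_Suc_iff using s by (metis add_lessD1 less_le_trans mult_2 le_add1)
  have inj: "inj s" using smono by (rule strict_mono_imp_inj_on)
  define L' where "L' = range s"
  have "\<forall>x\<in>SIP L'. x = 0 \<or> \<bar>x\<bar> > int M"
  proof
    fix x assume x: "x \<in> SIP L'"
    obtain A B where AB: "finite A" "A \<subseteq> L'" "finite B" "B \<subseteq> L'" "x = int (\<Sum>A) - int (\<Sum>B)"
      using SIP_elem[OF x] by blast
    define I where "I = s -` A"
    define J where "J = s -` B"
    have Ifin: "finite I" unfolding I_def using AB(1) inj by (simp add: finite_vimageI)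
    have Jfin: "finite J" unfolding J_def using AB(3) inj by (simp add: finite_vimageI)
    have AI: "A = s ` I" unfolding I_def using AB(2) unfolding L'_def by auto
    have BJ: "B = s ` J" unfolding J_def using AB(4) unfolding L'_def by auto
    have sA: "\<Sum>A = (\<Sum>i\<in>I. s i)" unfolding AI by (rule sum.reindex_cong[OF inj_on_subset[OF inj subset_UNIV]]) simp_all
    have sB: "\<Sum>B = (\<Sum>i\<in>J. s i)" unfolding BJ by (rule sum.reindex_cong[OF inj_on_subset[OF inj subset_UNIV]]) simp_all
    define I' where "I' = I - J"
    define J' where "J' = J - I"
    have I'fin: "finite I'" and J'fin: "finite J'" using Ifin Jfin unfolding I'_def J'_def by auto
    have "(\<Sum>i\<in>I. s i) = (\<Sum>i\<in>I'. s i) + (\<Sum>i\<in>I \<inter> J. s i)"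
    proof -
      have "I = I' \<union> (I \<inter> J)" unfolding I'_def by blast
      moreover have "I' \<inter> (I \<inter> J) = {}" unfolding I'_def by blast
      ultimately show ?thesis using sum.union_disjoint[of I' "I \<inter> J" s] I'fin Ifin by (metis finite_Int)
    qed
    moreover have "(\<Sum>i\<in>J. s i) = (\<Sum>i\<in>J'. s i) + (\<Sum>i\<in>I \<inter> J. s i)"
    proof -
      have "J = J' \<union> (I \<inter> J)" unfolding J'_def by blast
      moreover have "J' \<inter> (I \<inter> J) = {}" unfolding J'_def by blast
      ultimately show ?thesis using sum.union_disjoint[of J' "I \<inter> J" s] J'fin Jfin by (metis finite_Int)
    qed
    ultimately have xe: "x = int (\<Sum>i\<in>I'. s i) - int (\<Sum>i\<in>J'. s i)" using AB(5) sA sB by simp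
    have dis: "I' \<inter> J' = {}" "J' \<inter> I' = {}" unfolding I'_def J'_def by blast+
    show "x = 0 \<or> \<bar>x\<bar> > int M"
    proof (cases "I' \<union> J' = {}")
      case True then have "I' = {}" "J' = {}" by auto
      then show ?thesis using xe by simp
    next
      case False
      define j where "j = Max (I' \<union> J')"
      have fU: "finite (I' \<union> J')" using I'fin J'fin by simp
      have jin: "j \<in> I' \<union> J'" unfolding j_def using Max_in[OF fU False] .
      have mx: "\<forall>i\<in>I' \<union> J'. i \<le> j" unfolding j_def using Max_ge[OF fU] by blast
      show ?thesis
      proof (cases "j \<in> I'")
        case True
        have "(\<Sum>i\<in>J'. s i) + M < (\<Sum>i\<in>I'. s i)"
          by (rule sparse_key[OF sp I'fin J'fin dis(1) True mx])
        then show ?thesis using xe by linarith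
      next
        case False
        then have jJ: "j \<in> J'" using jin by blast
        have mx': "\<forall>i\<in>J' \<union> I'. i \<le> j" using mx by blast
        have "(\<Sum>i\<in>I'. s i) + M < (\<Sum>i\<in>J'. s i)"
          by (rule sparse_key[OF sp J'fin I'fin dis(2) jJ mx'])
        then show ?thesis using xe by linarith
      qed
    qed
  qed
  moreover have "L' \<subseteq> L" unfolding L'_def using s by blast
  moreover have "infinite L'" unfolding L'_def using range_inj_infinite[OF inj] .
  ultimately show ?thesis by blast
qed

lemma sharp_dual_dual:
  assumes sub: "\<And>A. A \<in> F \<Longrightarrow> A \<subseteq> Pos"
    and up: "\<And>A B. A \<in> F \<Longrightarrow> A \<subseteq> B \<Longrightarrow> B \<subseteq> Pos \<Longrightarrow> B \<in> F"
  shows "sharp_dual F = sharp_dual (dual_family F)"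
proof
  show "sharp_dual F \<subseteq> sharp_dual (dual_family F)"
  proof
    fix A assume A: "A \<in> sharp_dual F"
    have "A \<inter> C \<in> dual_family F" if C: "C \<in> dual_family F" for C
    proof -
      have "A \<inter> C \<inter> B \<noteq> {}" if B: "B \<in> F" for B
      proof -
        have "A \<inter> B \<in> F" using A B unfolding sharp_dual_def by blast
        then have "C \<inter> (A \<inter> B) \<noteq> {}" using C unfolding dual_family_def by blast
        then show ?thesis by blast
      qed
      moreover have "A \<inter> C \<subseteq> Pos" using A unfolding sharp_dual_def by blast
      ultimately show ?thesis unfolding dual_family_def by blast
    qed
    moreover have "A \<subseteq> Pos" using A unfolding sharp_dual_def by blast
    ultimately show "A \<in> sharp_dual (dual_family F)" unfolding sharp_dual_def by blast
  qed
next
  show "sharp_dual (dual_family F) \<subseteq> sharp_dual F"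
  proof
    fix A assume A: "A \<in> sharp_dual (dual_family F)"
    have APos: "A \<subseteq> Pos" using A unfolding sharp_dual_def by blast
    have "A \<inter> B \<in> F" if B: "B \<in> F" for B
    proof (rule ccontr)
      assume nF: "A \<inter> B \<notin> F"
      define C where "C = Pos - (A \<inter> B)"
      have "C \<inter> D \<noteq> {}" if D: "D \<in> F" for D
      proof
        assume "C \<inter> D = {}"
        then have "D \<subseteq> A \<inter> B" using sub[OF D] unfolding C_def by blast
        then have "A \<inter> B \<in> F" using up[OF D] APos by blast
        then show False using nF by blast
      qed
      then have "C \<in> dual_family F" unfolding dual_family_def C_def by blast
      then have "A \<inter> C \<in> dual_family F" using A unfolding sharp_dual_def by blast
      then have "A \<inter> C \<inter> B \<noteq> {}" using B unfolding dual_family_def by blast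
      then show False unfolding C_def by blast
    qed
    then show "A \<in> sharp_dual F" using APos unfolding sharp_dual_def by blast
  qed
qed

lemma tilde_eq: "tilde_gamma (dual_family SIP_family) = dual_family gamma_SIP_family"
proof
  show "tilde_gamma (dual_family SIP_family) \<subseteq> dual_family gamma_SIP_family"
  proof
    fix A assume A: "A \<in> tilde_gamma (dual_family SIP_family)"
    have APos: "A \<subseteq> Pos" using A unfolding tilde_gamma_def by blast
    have "A \<inter> B \<noteq> {}" if B: "B \<in> gamma_SIP_family" for B
    proof -
      obtain L u where L: "infinite L" "L \<subseteq> Pos" "SIP_translate L u \<subseteq> B"
        using B unfolding gamma_SIP_family_def by blast
      have An: "{m \<in> Pos. int m - (-u) \<in> int ` A} \<in> dual_family SIP_family"
        using A unfolding tilde_gamma_def by blast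
      have "SIP_translate L 0 \<in> SIP_family"
        unfolding SIP_family_def using L(1,2) by (auto simp: SIP_translate_def)
      then obtain m where m: "m \<in> {m \<in> Pos. int m - (-u) \<in> int ` A}" "m \<in> SIP_translate L 0"
        using An unfolding dual_family_def by blast
      have "int m - (-u) \<in> int ` A" using m(1) by blast
      then obtain k where k: "k \<in> A" "int m - (-u) = int k" by (elim imageE)
      have "int m \<in> SIP L" using m(2) unfolding SIP_translate_def by simp
      moreover have "int k - u = int m" using k(2) by simp
      moreover have "k \<in> Pos" using k(1) APos by blast
      ultimately have "k \<in> SIP_translate L u" unfolding SIP_translate_def by simp
      then show ?thesis using k(1) L(3) by blast
    qed
    then show "A \<in> dual_family gamma_SIP_family" unfolding dual_family_def using APos by blast
  qed
next
  show "dual_family gamma_SIP_family \<subseteq> tilde_gamma (dual_family SIP_family)"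
  proof
    fix A assume A: "A \<in> dual_family gamma_SIP_family"
    have APos: "A \<subseteq> Pos" using A unfolding dual_family_def by blast
    have "{m \<in> Pos. int m - n \<in> int ` A} \<in> dual_family SIP_family" for n :: int
    proof -
      have "{m \<in> Pos. int m - n \<in> int ` A} \<inter> B \<noteq> {}" if B: "B \<in> SIP_family" for B
      proof -
        obtain L where L: "infinite L" "L \<subseteq> Pos" "SIP_translate L 0 \<subseteq> B"
          using B unfolding SIP_family_def by blast
        have "L \<noteq> {}" using L(1) by (rule infinite_imp_nonempty)
        then obtain l where l: "l \<in> L" by blast
        have lpos: "l > 0" using l L(2) unfolding Pos_def by blast
        define L1 where "L1 = L - {..l}"
        have L1inf: "infinite L1" unfolding L1_def using L(1) by (simp add: Diff_infinite_finite)
        obtain L2 where L2: "L2 \<subseteq> L1" "infinite L2"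
            "\<forall>x\<in>SIP L2. x = 0 \<or> \<bar>x\<bar> > int (nat \<bar>n\<bar> + l)"
          using sparse[OF L1inf, where M = "nat \<bar>n\<bar> + l"] by blast
        have L2pos: "L2 \<subseteq> Pos" using L2(1) L(2) unfolding L1_def by blast
        have "SIP_translate L2 (int l - n) \<in> gamma_SIP_family"
          unfolding gamma_SIP_family_def using L2(2) L2pos by (auto simp: SIP_translate_def)
        then obtain k where k: "k \<in> A" "k \<in> SIP_translate L2 (int l - n)"
          using A unfolding dual_family_def by blast
        define s where "s = int k - (int l - n)"
        have sS: "s \<in> SIP L2" using k(2) unfolding SIP_translate_def s_def by simp
        have kpos: "k > 0" using k(1) APos unfolding Pos_def by blast
        have pos: "int k + n > 0"
        proof -
          have e: "int (nat \<bar>n\<bar> + l) = \<bar>n\<bar> + int l" by simp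
          have "s = 0 \<or> \<bar>s\<bar> > int (nat \<bar>n\<bar> + l)" using L2(3) sS by blast
          then have "s = 0 \<or> \<bar>s\<bar> > \<bar>n\<bar> + int l" unfolding e .
          moreover have "int k > 0" using kpos by simp
          moreover have "int l > 0" using lpos by simp
          moreover have "int k + n = int l + s" unfolding s_def by simp
          ultimately show ?thesis by (cases "s \<ge> 0") (auto simp: abs_if split: if_splits)
        qed
        define m where "m = nat (int k + n)"
        have mi: "int m = int k + n" unfolding m_def using pos by simp
        have "int m - n = int k" using mi by simp
        then have "int m - n \<in> int ` A" using k(1) by (metis imageI)
        moreover have "m \<in> Pos" unfolding Pos_def using mi pos by simp
        ultimately have m1: "m \<in> {m \<in> Pos. int m - n \<in> int ` A}" by blast
        have dis: "{l} \<inter> L2 = {}" using L2(1) unfolding L1_def by blast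
        have "int l + s \<in> SIP ({l} \<union> L2)" by (rule SIP_add[OF SIP_single sS dis])
        moreover have "{l} \<union> L2 \<subseteq> L" using l L2(1) unfolding L1_def by blast
        ultimately have "int l + s \<in> SIP L" using SIP_mono by blast
        moreover have "int l + s = int m" using mi unfolding s_def by simp
        ultimately have "m \<in> SIP_translate L 0" unfolding SIP_translate_def using m1 by simp
        then show ?thesis using m1 L(3) by blast
      qed
      then show ?thesis unfolding dual_family_def by blast
    qed
    then show "A \<in> tilde_gamma (dual_family SIP_family)" unfolding tilde_gamma_def using APos by blast
  qed
qed

theorem theorem5p2:
  fixes X :: "'a::metric_space set" and T :: "'a \<Rightarrow> 'a" and U V :: "'a set"
  assumes "mild_mixing X T"
    and "openin (top_of_set X) U" and "U \<noteq> {}"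
    and "openin (top_of_set X) V" and "V \<noteq> {}"
  shows "hitting_set T U V \<in> sharp_dual gamma_SIP_family
    \<and> sharp_dual gamma_SIP_family = sharp_dual (tilde_gamma (dual_family SIP_family))
    \<and> (\<forall>A \<in> gamma_SIP_family. hitting_set T U V \<inter> A \<in> gamma_SIP_family)"
proof -
  have HPos: "hitting_set T U V \<subseteq> Pos" unfolding hitting_set_def by blast
  have P3: "\<forall>A \<in> gamma_SIP_family. hitting_set T U V \<inter> A \<in> gamma_SIP_family"
  proof
    fix B assume B: "B \<in> gamma_SIP_family"
    obtain L u where L: "infinite L" "L \<subseteq> Pos" "SIP_translate L u \<subseteq> B" and BPos: "B \<subseteq> Pos"
      using B unfolding gamma_SIP_family_def by blast
    obtain L' u' where L': "infinite L'" "L' \<subseteq> Pos"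
        "SIP_translate L' u' \<subseteq> hitting_set T U V \<inter> SIP_translate L u"
      using claim1[OF assms L(1,2), of u] by blast
    have "SIP_translate L' u' \<subseteq> hitting_set T U V \<inter> B" using L'(3) L(3) by blast
    moreover have "hitting_set T U V \<inter> B \<subseteq> Pos" using HPos by blast
    ultimately show "hitting_set T U V \<inter> B \<in> gamma_SIP_family"
      unfolding gamma_SIP_family_def using L'(1,2) by blast
  qed
  have P1: "hitting_set T U V \<in> sharp_dual gamma_SIP_family"
    unfolding sharp_dual_def using HPos P3 by blast
  have "sharp_dual gamma_SIP_family = sharp_dual (dual_family gamma_SIP_family)"
  proof (rule sharp_dual_dual)
    show "A \<subseteq> Pos" if "A \<in> gamma_SIP_family" for A using that unfolding gamma_SIP_family_def by blast
    show "B \<in> gamma_SIP_family" if "A \<in> gamma_SIP_family" "A \<subseteq> B" "B \<subseteq> Pos" for A B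
      using that unfolding gamma_SIP_family_def by blast
  qed
  then have P2: "sharp_dual gamma_SIP_family = sharp_dual (tilde_gamma (dual_family SIP_family))"
    using tilde_eq by simp
  show ?thesis using P1 P2 P3 by blast
qed

end
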